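(* Let $P$ and $Q$ be probability measures such that $\frac{\mathrm dP}{\mathrm dQ}\le R$ and $\frac{\mathrm dQ}{\mathrm dP}\le R$ hold uniformly over the probability space. Then \[ \max\{2-0.5\log R,\ 1\}\cdot\mathsf{Hel}_{1/2}(P\|Q)\le\mathsf{KL}(P\|Q)\le(2+\log R)\cdot\mathsf{Hel}_{1/2}(P\|Q). \] Furthermore, if $R\le4.5$, then \[ (2-0.4\log R)\cdot\mathsf{Hel}_{1/2}(P\|Q)\le\mathsf{KL}(P\|Q)\le(2+0.4\log R)\cdot\mathsf{Hel}_{1/2}(P\|Q). \]
   Context: $\mathsf{KL}(P\|Q)=\int\mathrm dP\log\frac{\mathrm dP}{\mathrm dQ}$ (natural logarithm) and $\mathsf{Hel}_{1/2}(P\|Q)=\int(\sqrt{\mathrm dP}-\sqrt{\mathrm dQ})^2=2-2\int\sqrt{\mathrm dP\,\mathrm dQ}$ (unnormalized squared Hellinger distance). *)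

theory Defs
  imports "HOL-Probability.Probability"
begin

text \<open>Unnormalized squared Hellinger distance Hel_{1/2}(P||Q) = 2 - 2 * integral of sqrt(dP dQ).
  For P absolutely continuous w.r.t. Q, the integral of sqrt(dP dQ) equals the Q-integral of
  sqrt(dP/dQ).\<close>
definition hellinger :: "'a measure \<Rightarrow> 'a measure \<Rightarrow> real" where
  "hellinger P Q = 2 - 2 * (\<integral>x. sqrt (enn2real (RN_deriv Q P x)) \<partial>Q)"

text \<open>KL(P||Q) with natural logarithm; library convention: KL_divergence b M N = KL(N||M).\<close>
definition KL :: "'a measure \<Rightarrow> 'a measure \<Rightarrow> real" where
  "KL P Q = KL_divergence (exp 1) Q P"

end

theory Submission
  imports Defs
begin


lemma B1: "0 < (t::real) \<Longrightarrow> 1 - 1/t \<le> ln t"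
  using ln_le_minus_one[of "1/t"] by (simp add: ln_div)

lemma B1': "0 < (t::real) \<Longrightarrow> t - 1 \<le> t * ln t"
proof -
  assume t: "0 < t"
  have "t * (1 - 1/t) \<le> t * ln t" using B1[OF t] t by (intro mult_left_mono) auto
  moreover have "t*(1-1/t) = t-1" using t by (simp add: field_simps)
  ultimately show ?thesis by simp
qed

lemma B2: assumes "0 < (t::real)" "t \<le> 1" shows "ln t \<le> 2*(t-1)/(t+1)"
proof -
  let ?h = "\<lambda>x::real. -(2*(x-1)/(x+1) - ln x)"
  have "?h t \<le> ?h 1"
  proof (rule DERIV_nonneg_imp_nondecreasing[OF assms(2)])
    fix x assume x: "t \<le> x" "x \<le> 1"
    hence xp: "0 < x" using assms by auto
    have "DERIV ?h x :> (1/x - 4/(x+1)^2)"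
      using xp by (auto intro!: derivative_eq_intros simp: field_simps power2_eq_square)
    moreover have "1/x - 4/(x+1)^2 = (x-1)^2/(x*(x+1)^2)"
      using xp by (simp add: field_simps add_pos_pos) (simp add: algebra_simps power2_eq_square)
    moreover have "(x-1)^2/(x*(x+1)^2) \<ge> 0" using xp by simp
    ultimately show "\<exists>y. DERIV ?h x :> y \<and> 0 \<le> y" by auto
  qed
  thus ?thesis by simp
qed

definition ff :: "real \<Rightarrow> real" where "ff x = 2*x^2*ln x - x^2 + 1"

lemma P1: "0 < t \<Longrightarrow> (t-1)^2 \<le> ff t"
proof -
  assume t: "0 < t"
  have "t * (t - 1) \<le> t * (t * ln t)" using B1'[OF t] t by (intro mult_left_mono) auto
  thus ?thesis unfolding ff_def by (simp add: algebra_simps power2_eq_square)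
qed

lemma D2: "0 < x \<Longrightarrow> DERIV (\<lambda>x. ff x - 2*(x-1)^2) x :> 4*(x*ln x - (x-1))"
  unfolding ff_def by (auto intro!: derivative_eq_intros simp: field_simps power2_eq_square)

lemma P2: assumes "1 \<le> t" shows "2*(t-1)^2 \<le> ff t"
proof -
  have "(\<lambda>x. ff x - 2*(x-1)^2) 1 \<le> (\<lambda>x. ff x - 2*(x-1)^2) t"
  proof (rule DERIV_nonneg_imp_nondecreasing[OF assms])
    fix x assume x: "1 \<le> x" "x \<le> t"
    thus "\<exists>y. DERIV (\<lambda>x. ff x - 2*(x-1)^2) x :> y \<and> 0 \<le> y"
      using D2[of x] B1'[of x] by (intro exI[of _ "4*(x*ln x - (x-1))"]) auto
  qed
  thus ?thesis by (simp add: ff_def)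
qed

lemma P5: assumes "0 < t" "t \<le> 1" shows "ff t \<le> 2*(t-1)^2"
proof -
  have "(\<lambda>x. ff x - 2*(x-1)^2) t \<le> (\<lambda>x. ff x - 2*(x-1)^2) 1"
  proof (rule DERIV_nonneg_imp_nondecreasing[OF assms(2)])
    fix x assume x: "t \<le> x" "x \<le> 1"
    thus "\<exists>y. DERIV (\<lambda>x. ff x - 2*(x-1)^2) x :> y \<and> 0 \<le> y"
      using D2[of x] B1'[of x] assms by (intro exI[of _ "4*(x*ln x - (x-1))"]) auto
  qed
  thus ?thesis by (simp add: ff_def)
qed

lemma P4: assumes "1 \<le> t" shows "ff t \<le> (2 + 2*ln t)*(t-1)^2"
proof -
  let ?h = "\<lambda>x. (2 + 2*ln x)*(x-1)^2 - ff x"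
  have "?h 1 \<le> ?h t"
  proof (rule DERIV_nonneg_imp_nondecreasing[OF assms])
    fix x assume x: "1 \<le> x" "x \<le> t"
    have d: "DERIV ?h x :> 2*(x-1)^2/x + 4*((x-1) - ln x)"
      using x unfolding ff_def by (auto intro!: derivative_eq_intros simp: field_simps power2_eq_square)
    have "0 \<le> 2*(x-1)^2/x + 4*((x-1) - ln x)"
      using ln_le_minus_one[of x] x by (intro add_nonneg_nonneg) auto
    thus "\<exists>y. DERIV ?h x :> y \<and> 0 \<le> y" using d by auto
  qed
  thus ?thesis by (simp add: ff_def)
qed

lemma P7: assumes "0 < t" "t \<le> 1" shows "(2 + 4/5*ln t)*(t-1)^2 \<le> ff t"
proof -
  let ?h = "\<lambda>x. (2 + 4/5*ln x)*(x-1)^2 - ff x"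
  have "?h t \<le> ?h 1"
  proof (rule DERIV_nonneg_imp_nondecreasing[OF assms(2)])
    fix x assume x: "t \<le> x" "x \<le> 1"
    hence xp: "0 < x" using assms by auto
    have d: "DERIV ?h x :> 4/5*(x-1)^2/x + 4*(x-1) - ln x * (12/5*x + 8/5)"
      using xp unfolding ff_def by (auto intro!: derivative_eq_intros simp: field_simps power2_eq_square)
    have "ln x * (12/5*x + 8/5) \<le> 2*(x-1)/(x+1) * (12/5*x + 8/5)"
      using B2[OF xp x(2)] xp by (intro mult_right_mono) auto
    moreover have "4/5*(x-1)^2/x + 4*(x-1) - 2*(x-1)/(x+1) * (12/5*x + 8/5) = 4/5*(x-1)^2/(x*(x+1))"
      using xp apply (subgoal_tac "x+1 \<noteq> 0") apply (simp add: divide_simps) apply (simp add: algebra_simps power2_eq_square) by simp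
    moreover have "0 \<le> 4/5*(x-1)^2/(x*(x+1))" using xp by simp
    ultimately have "0 \<le> 4/5*(x-1)^2/x + 4*(x-1) - ln x * (12/5*x + 8/5)" by linarith
    thus "\<exists>y. DERIV ?h x :> y \<and> 0 \<le> y" using d by auto
  qed
  thus ?thesis by (simp add: ff_def)
qed


definition rho :: "real \<Rightarrow> real" where "rho x = 5*(x-1)*(3*x-1)/(2*(3*x^2+4*x-2))"
lemma D6: assumes "1 \<le> x" shows "DERIV (\<lambda>x. rho x - ln x) x :> (x-1)^2*(-9*x^2+18*x-4)/(x*(3*x^2+4*x-2)^2)"
proof -
  have p: "3*x^2+4*x-2 > 0" using assms by (smt (verit) one_le_power)
  have xp: "x > 0" using assms by simp
  have d: "DERIV (\<lambda>x. rho x - ln x) x :> 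
     ((5*(3*x-1) + 5*(x-1)*3)*(2*(3*x^2+4*x-2)) - 5*(x-1)*(3*x-1)*(2*(6*x+4)))/(2*(3*x^2+4*x-2))^2 - 1/x"
    unfolding rho_def using p xp
    by (auto intro!: derivative_eq_intros simp: power2_eq_square field_simps)
  have "((5*(3*x-1) + 5*(x-1)*3)*(2*(3*x^2+4*x-2)) - 5*(x-1)*(3*x-1)*(2*(6*x+4)))/(2*(3*x^2+4*x-2))^2 - 1/x
     = (x-1)^2*(-9*x^2+18*x-4)/(x*(3*x^2+4*x-2)^2)"
    using p xp by (simp add: divide_simps) (simp add: algebra_simps power2_eq_square power3_eq_cube power4_eq_xxxx)
  with d show ?thesis by simp
qed

lemma expl: assumes "0 \<le> (x::real)" shows "(\<Sum>n<9. x^n / fact n) \<le> exp x"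
proof -
  have s: "summable (\<lambda>n. x^n /\<^sub>R fact n)" using exp_converges sums_summable by blast
  have "sum (\<lambda>n. x^n /\<^sub>R fact n) {..<9} \<le> suminf (\<lambda>n. x^n /\<^sub>R fact n)"
    by (rule sum_le_suminf[OF s]) (auto simp: assms)
  thus ?thesis using sums_unique[OF exp_converges[of x]] by (simp add: divide_inverse mult.commute)
qed

lemma ln45: "ln (9/2::real) \<le> 3009/2000"
proof -
  have "(9/2::real) \<le> (\<Sum>n<9. (3009/2000)^n / fact n)"
    by (simp add: lessThan_nat_numeral fact_numeral power_divide)
  hence "9/2 \<le> exp (3009/2000::real)" using expl[of "3009/2000"] by linarith
  thus ?thesis by (metis ln_exp ln_le_cancel_iff exp_gt_zero zero_less_divide_iff zero_less_numeral)
qed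

lemma Nc: "ln (sqrt (9/2)) \<le> rho (sqrt (9/2))"
proof -
  define c where "c = sqrt (9/2::real)"
  have c2: "c^2 = 9/2" unfolding c_def by simp
  have c0: "0 \<le> c" unfolding c_def by simp
  have cle: "c \<le> 21215/10000"
  proof -
    have "sqrt (9/2) \<le> sqrt ((21215/10000::real)^2)" by (rule real_sqrt_le_mono) (simp add: power2_eq_square)
    thus ?thesis unfolding c_def by simp
  qed
  have lc: "ln c \<le> 3009/4000" using ln45 unfolding c_def by (simp add: ln_sqrt)
  have e1: "5*(c-1)*(3*c-1) = 5*(29/2 - 4*c)" using c2 by (simp add: algebra_simps power2_eq_square)
  have e2: "3*c^2+4*c-2 = 23/2+4*c" using c2 by simp
  have pos: "0 < 2*(23/2+4*c)" using c0 by simp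
  have "3009/4000 \<le> 5*(29/2 - 4*c) / (2*(23/2+4*c))"
    using pos cle by (simp add: divide_simps)
  moreover have "rho c = 5*(29/2 - 4*c) / (2*(23/2+4*c))" by (simp only: rho_def e1 e2)
  ultimately have "3009/4000 \<le> rho c" by simp
  with lc show ?thesis unfolding c_def by linarith
qed

lemma lnrho: assumes t1: "1 \<le> t" and t2: "t^2 \<le> 9/2" shows "ln t \<le> rho t"
proof -
  define c where "c = sqrt (9/2::real)"
  have tc: "t \<le> c" unfolding c_def using t1 t2 by (simp add: real_le_rsqrt)
  let ?phi = "\<lambda>x. rho x - ln x"
  let ?p = "\<lambda>x::real. -9*x^2+18*x-4"
  have dpos: "\<And>x::real. 1 \<le> x \<Longrightarrow> 0 < x*(3*x^2+4*x-2)^2"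
  proof -
    fix x :: real assume "1 \<le> x"
    moreover have "3*x^2+4*x-2 > 0" using \<open>1 \<le> x\<close> by (smt (verit) one_le_power)
    ultimately show "0 < x*(3*x^2+4*x-2)^2" by simp
  qed
  show ?thesis
  proof (cases "?p t \<ge> 0")
    case True
    have "?phi 1 \<le> ?phi t"
    proof (rule DERIV_nonneg_imp_nondecreasing[OF t1])
      fix x assume x: "1 \<le> x" "x \<le> t"
      have "?p x - ?p t = (t-x)*(9*(x+t)-18)" by (simp add: algebra_simps power2_eq_square)
      moreover have "0 \<le> (t-x)*(9*(x+t)-18)" using x by (intro mult_nonneg_nonneg) auto
      ultimately have "0 \<le> ?p x" using True by linarith
      hence "0 \<le> (x-1)^2*(-9*x^2+18*x-4)/(x*(3*x^2+4*x-2)^2)"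
        using dpos[OF x(1)] by simp
      thus "\<exists>y. DERIV ?phi x :> y \<and> 0 \<le> y" using D6[OF x(1)] by blast
    qed
    thus ?thesis by (simp add: rho_def)
  next
    case False
    have "(\<lambda>x. - ?phi x) t \<le> (\<lambda>x. - ?phi x) c"
    proof (rule DERIV_nonneg_imp_nondecreasing[OF tc])
      fix x assume x: "t \<le> x" "x \<le> c"
      have x1: "1 \<le> x" using x t1 by simp
      have "?p x - ?p t = (t-x)*(9*(x+t)-18)" by (simp add: algebra_simps power2_eq_square)
      moreover have "(t-x)*(9*(x+t)-18) \<le> 0" using x t1 by (intro mult_nonpos_nonneg) auto
      ultimately have "?p x \<le> 0" using False by linarith
      hence "0 \<le> - ((x-1)^2*(-9*x^2+18*x-4)/(x*(3*x^2+4*x-2)^2))"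
        using dpos[OF x1] by (simp add: divide_nonpos_pos mult_nonneg_nonpos)
      thus "\<exists>y. DERIV (\<lambda>x. - ?phi x) x :> y \<and> 0 \<le> y" using DERIV_minus[OF D6[OF x1]] by blast
    qed
    with Nc show ?thesis unfolding c_def by simp
  qed
qed



lemma P6: assumes "1 \<le> t" "t^2 \<le> 9/2" shows "ff t \<le> (2 + 4/5*ln t)*(t-1)^2"
proof -
  have p: "3*t^2+4*t-2 > 0" using assms by (smt (verit) one_le_power)
  have "ln t * (2*(3*t^2+4*t-2)) \<le> rho t * (2*(3*t^2+4*t-2))"
    using lnrho[OF assms] p by (intro mult_right_mono) auto
  also have "\<dots> = 5*(t-1)*(3*t-1)" unfolding rho_def using p by simp
  finally have h: "ln t * (2*(3*t^2+4*t-2)) \<le> 5*(t-1)*(3*t-1)" .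
  have eq: "5*((2 + 4/5*ln t)*(t-1)^2 - ff t) = ((5*(t-1)*(3*t-1)) - ln t * (2*(3*t^2+4*t-2)))"
    unfolding ff_def by (simp add: field_simps power2_eq_square)
  have "0 \<le> 5*((2 + 4/5*ln t)*(t-1)^2 - ff t)" unfolding eq using h by linarith
  thus ?thesis by simp
qed


lemma PW:
  fixes r R :: real
  assumes R1: "1 \<le> R" and rl: "1/R \<le> r" and ru: "r \<le> R"
  shows "max (2 - 0.5 * ln R) 1 * (sqrt r - 1)^2 \<le> r * ln r - r + 1
     \<and> r * ln r - r + 1 \<le> (2 + ln R) * (sqrt r - 1)^2
     \<and> (R \<le> 4.5 \<longrightarrow> (2 - 0.4 * ln R) * (sqrt r - 1)^2 \<le> r * ln r - r + 1
                       \<and> r * ln r - r + 1 \<le> (2 + 0.4 * ln R) * (sqrt r - 1)^2)"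
proof -
  have Rp: "0 < R" using R1 by simp
  have rp: "0 < r" using rl Rp by (smt (verit) divide_pos_pos)
  define t where "t = sqrt r"
  have tp: "0 < t" unfolding t_def using rp by simp
  have t2: "t^2 = r" unfolding t_def using rp by simp
  have lt: "ln t = ln r / 2" unfolding t_def using rp by (simp add: ln_sqrt)
  have E: "r * ln r - r + 1 = ff t" unfolding ff_def using t2 lt by simp
  have lR: "0 \<le> ln R" using R1 by simp
  have lru: "ln r \<le> ln R" using ru rp by simp
  have lrl: "- ln R \<le> ln r"
  proof -
    have "ln (1/R) \<le> ln r" using rl rp Rp by (subst ln_le_cancel_iff) auto
    thus ?thesis using Rp by (simp add: ln_div)
  qed
  define H where "H = (t - 1)^2"
  have H0: "0 \<le> H" unfolding H_def by simp
  have A: "(2 - 0.4 * ln R) * H \<le> ff t"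
  proof (cases "1 \<le> t")
    case True
    have "(2 - 0.4 * ln R) * H \<le> 2 * H" using lR H0 by (intro mult_right_mono) auto
    also have "\<dots> \<le> ff t" using P2[OF True] unfolding H_def .
    finally show ?thesis .
  next
    case False
    have "(2 - 0.4 * ln R) * H \<le> (2 + 4/5 * ln t) * H" using lrl lt H0 by (intro mult_right_mono) auto
    also have "\<dots> \<le> ff t" using P7[OF tp] False unfolding H_def by simp
    finally show ?thesis .
  qed
  have B: "max (2 - 0.5 * ln R) 1 * H \<le> ff t"
  proof (cases "2 - 0.5 * ln R \<le> 1")
    case True
    thus ?thesis using P1[OF tp] unfolding H_def by simp
  next
    case False
    have "max (2 - 0.5 * ln R) 1 * H = (2 - 0.5 * ln R) * H" using False by simp
    also have "\<dots> \<le> (2 - 0.4 * ln R) * H" using lR H0 by (intro mult_right_mono) auto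
    finally show ?thesis using A by simp
  qed
  have C: "ff t \<le> (2 + ln R) * H"
  proof (cases "1 \<le> t")
    case True
    have "ff t \<le> (2 + 2*ln t) * H" using P4[OF True] unfolding H_def .
    also have "\<dots> \<le> (2 + ln R) * H" using lru lt H0 by (intro mult_right_mono) auto
    finally show ?thesis .
  next
    case False
    have "ff t \<le> 2 * H" using P5[OF tp] False unfolding H_def by simp
    also have "\<dots> \<le> (2 + ln R) * H" using lR H0 by (intro mult_right_mono) auto
    finally show ?thesis .
  qed
  have D: "R \<le> 4.5 \<Longrightarrow> ff t \<le> (2 + 0.4 * ln R) * H"
  proof (cases "1 \<le> t")
    case True
    assume R45: "R \<le> 4.5"
    have "t^2 \<le> 9/2" using t2 ru R45 by simp
    hence "ff t \<le> (2 + 4/5*ln t) * H" using P6[OF True] unfolding H_def by simp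
    also have "\<dots> \<le> (2 + 0.4 * ln R) * H" using lru lt H0 by (intro mult_right_mono) auto
    finally show ?thesis .
  next
    case False
    have "ff t \<le> 2 * H" using P5[OF tp] False unfolding H_def by simp
    also have "\<dots> \<le> (2 + 0.4 * ln R) * H" using lR H0 by (intro mult_right_mono) auto
    finally show ?thesis .
  qed
  show ?thesis using A B C D unfolding E H_def t_def by blast
qed


lemma int_le_aux:
  fixes f g :: "'a \<Rightarrow> real"
  assumes "integrable M f" "integrable M g" "AE x in M. c * f x \<le> g x"
  shows "c * integral\<^sup>L M f \<le> integral\<^sup>L M g"
proof -
  have "c * integral\<^sup>L M f = (\<integral>x. c * f x \<partial>M)" by simp
  also have "\<dots> \<le> integral\<^sup>L M g" using assms by (intro integral_mono_AE) auto
  finally show ?thesis .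
qed

lemma int_ge_aux:
  fixes f g :: "'a \<Rightarrow> real"
  assumes "integrable M f" "integrable M g" "AE x in M. g x \<le> c * f x"
  shows "integral\<^sup>L M g \<le> c * integral\<^sup>L M f"
proof -
  have "integral\<^sup>L M g \<le> (\<integral>x. c * f x \<partial>M)" using assms by (intro integral_mono_AE) auto
  also have "\<dots> = c * integral\<^sup>L M f" by simp
  finally show ?thesis .
qed

theorem fact1:
  fixes P Q :: "'a measure" and R :: real
  assumes "prob_space P" and "prob_space Q"
    and "sets P = sets Q"
    and "absolutely_continuous Q P" and "absolutely_continuous P Q"
    and "AE x in Q. RN_deriv Q P x \<le> ennreal R"
    and "AE x in P. RN_deriv P Q x \<le> ennreal R"
  shows "max (2 - 0.5 * ln R) 1 * hellinger P Q \<le> KL P Q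
         \<and> KL P Q \<le> (2 + ln R) * hellinger P Q
         \<and> (R \<le> 4.5 \<longrightarrow>
              (2 - 0.4 * ln R) * hellinger P Q \<le> KL P Q
              \<and> KL P Q \<le> (2 + 0.4 * ln R) * hellinger P Q)"
proof -
  interpret P: prob_space P by fact
  interpret Q: prob_space Q by fact
  have sQP: "sets Q = sets P" using assms(3) by simp
  define r where "r = (\<lambda>x. enn2real (RN_deriv Q P x))"
  have rm[measurable]: "r \<in> borel_measurable Q" unfolding r_def by measurable
  have dP: "density Q (RN_deriv Q P) = P" using Q.density_RN_deriv[OF assms(4,3)] .
  have mPQ: "RN_deriv P Q \<in> borel_measurable Q"
    using borel_measurable_RN_deriv[of P Q] by (simp only: measurable_cong_sets[OF sQP refl])
  have "density Q (\<lambda>x. RN_deriv Q P x * RN_deriv P Q x) = density (density Q (RN_deriv Q P)) (RN_deriv P Q)"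
    using mPQ by (subst density_density_eq) auto
  also have "\<dots> = Q" unfolding dP using P.density_RN_deriv[OF assms(5) sQP] .
  also have "\<dots> = density Q (\<lambda>_. 1)" by (simp add: density_1)
  finally have "AE x in Q. RN_deriv Q P x * RN_deriv P Q x = 1"
    using mPQ by (intro Q.density_unique) auto
  moreover have "AE x in Q. RN_deriv P Q x \<le> ennreal R"
    using absolutely_continuous_AE[OF sQP assms(5) assms(7)] .
  moreover note assms(6)
  ultimately have ae: "AE x in Q. RN_deriv Q P x * RN_deriv P Q x = 1 \<and> RN_deriv P Q x \<le> ennreal R
     \<and> RN_deriv Q P x \<le> ennreal R" by eventually_elim auto
  have R1: "1 \<le> R"
  proof -
    have "AE x in Q. 1 \<le> R" using ae
    proof eventually_elim
      case (elim x)
      have "ennreal 1 = RN_deriv Q P x * RN_deriv P Q x" using elim by simp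
      also have "\<dots> \<le> ennreal R * ennreal R" using elim by (intro mult_mono) auto
      finally have h: "ennreal 1 \<le> ennreal R * ennreal R" .
      show ?case
      proof (cases "0 \<le> R")
        case True
        hence "1 \<le> R * R" using h by (simp add: ennreal_mult[symmetric])
        moreover have "R < 1 \<Longrightarrow> R * R < 1"
        proof -
          assume "R < 1"
          hence "R * R \<le> R * 1" using True by (intro mult_left_mono) auto
          thus "R * R < 1" using \<open>R < 1\<close> by simp
        qed
        ultimately show ?thesis by linarith
      next
        case False
        thus ?thesis using h by (simp add: ennreal_neg)
      qed
    qed
    thus ?thesis by simp
  qed
  have rb: "AE x in Q. 1/R \<le> r x \<and> r x \<le> R" using ae
  proof eventually_elim
    case (elim x)
    let ?a = "RN_deriv Q P x" and ?b = "RN_deriv P Q x"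
    have rR: "r x \<le> R" unfolding r_def using elim R1 by (intro enn2real_leI) auto
    have "?a * ?b \<le> ?a * ennreal R" using elim by (intro mult_left_mono) auto
    hence "enn2real (?a * ?b) \<le> enn2real (?a * ennreal R)"
    proof (rule enn2real_mono)
      have "?a * ennreal R \<le> ennreal R * ennreal R" using elim by (intro mult_right_mono) auto
      also have "\<dots> = ennreal (R * R)" using R1 by (simp add: ennreal_mult)
      finally show "?a * ennreal R < top" using order.strict_trans1 ennreal_less_top by blast
    qed
    hence "1 \<le> r x * R" using elim R1 unfolding r_def by (simp add: enn2real_mult)
    hence "1/R \<le> r x" using R1 by (simp add: divide_simps mult.commute)
    with rR show ?case by simp
  qed
  have Psf: "sigma_finite_measure P" by (rule P.sigma_finite_measure_axioms)
  have intP: "\<And>f. f \<in> borel_measurable Q \<Longrightarrow> integral\<^sup>L P f = (\<integral>x. r x * f x \<partial>Q)"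
    unfolding r_def using Q.RN_deriv_integral[OF Psf assms(4,3)] by blast
  have rint: "(\<integral>x. r x \<partial>Q) = 1"
    using intP[of "\<lambda>_. 1"] P.prob_space by simp
  have KLeq: "KL P Q = (\<integral>x. r x * ln (r x) \<partial>Q)"
  proof -
    have "KL P Q = integral\<^sup>L P (entropy_density (exp 1) Q P)"
      unfolding KL_def KL_divergence_def ..
    also have "\<dots> = (\<integral>x. r x * entropy_density (exp 1) Q P x \<partial>Q)"
      by (rule intP) measurable
    also have "\<dots> = (\<integral>x. r x * ln (r x) \<partial>Q)"
      unfolding entropy_density_def r_def by (simp add: log_def)
    finally show ?thesis .
  qed
  have Heq: "hellinger P Q = 2 - 2 * (\<integral>x. sqrt (r x) \<partial>Q)"
    unfolding hellinger_def r_def ..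
  have bnd: "AE x in Q. norm (r x) \<le> R \<and> norm (sqrt (r x)) \<le> sqrt R \<and> norm (r x * ln (r x)) \<le> R * ln R"
    using rb
  proof eventually_elim
    case (elim x)
    have rp: "0 < r x" using elim R1 by (smt (verit) divide_pos_pos)
    have l1: "ln (r x) \<le> ln R" using elim rp by simp
    have "ln (1/R) \<le> ln (r x)" using elim rp R1 by (subst ln_le_cancel_iff) auto
    hence l2: "- ln R \<le> ln (r x)" using R1 by (simp add: ln_div)
    have "\<bar>r x * ln (r x)\<bar> = r x * \<bar>ln (r x)\<bar>" using rp by (simp add: abs_mult)
    also have "\<dots> \<le> R * ln R" using elim rp l1 l2 R1 by (intro mult_mono) (auto simp: abs_le_iff)
    finally show ?case using elim rp by simp
  qed
  have ir: "integrable Q r"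
    using bnd by (intro Q.integrable_const_bound[where B=R]) (auto elim: eventually_mono)
  have isq: "integrable Q (\<lambda>x. sqrt (r x))"
    using bnd by (intro Q.integrable_const_bound[where B="sqrt R"]) (auto elim: eventually_mono)
  have irl: "integrable Q (\<lambda>x. r x * ln (r x))"
    using bnd by (intro Q.integrable_const_bound[where B="R * ln R"]) (auto elim: eventually_mono)
  define E where "E = (\<lambda>x. r x * ln (r x) - r x + 1)"
  define H where "H = (\<lambda>x. (sqrt (r x) - 1)^2)"
  have iE: "integrable Q E" unfolding E_def using ir irl by auto
  have Hx: "H = (\<lambda>x. r x - 2 * sqrt (r x) + 1)"
    unfolding H_def r_def by (auto simp: power2_eq_square algebra_simps)
  have iH: "integrable Q H" unfolding Hx using ir isq by auto
  have KLE: "KL P Q = integral\<^sup>L Q E"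
    unfolding KLeq E_def using ir irl rint Q.prob_space by (simp add: Bochner_Integration.integral_add Bochner_Integration.integral_diff)
  have HH: "hellinger P Q = integral\<^sup>L Q H"
    unfolding Heq Hx using ir isq rint Q.prob_space by (simp add: Bochner_Integration.integral_add Bochner_Integration.integral_diff)
  have pw: "AE x in Q. max (2 - 0.5 * ln R) 1 * H x \<le> E x
     \<and> E x \<le> (2 + ln R) * H x
     \<and> (R \<le> 4.5 \<longrightarrow> (2 - 0.4 * ln R) * H x \<le> E x \<and> E x \<le> (2 + 0.4 * ln R) * H x)"
    using rb
  proof eventually_elim
    case (elim x)
    show ?case unfolding E_def H_def using PW[OF R1, of "r x"] elim by blast
  qed
  have g1: "max (2 - 0.5 * ln R) 1 * hellinger P Q \<le> KL P Q"
    unfolding KLE HH using iH iE pw by (intro int_le_aux) (auto elim: eventually_mono)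
  have g2: "KL P Q \<le> (2 + ln R) * hellinger P Q"
    unfolding KLE HH using iH iE pw by (intro int_ge_aux) (auto elim: eventually_mono)
  have g3: "R \<le> 4.5 \<Longrightarrow> (2 - 0.4 * ln R) * hellinger P Q \<le> KL P Q"
    unfolding KLE HH using iH iE pw by (intro int_le_aux) (auto elim: eventually_mono)
  have g4: "R \<le> 4.5 \<Longrightarrow> KL P Q \<le> (2 + 0.4 * ln R) * hellinger P Q"
    unfolding KLE HH using iH iE pw by (intro int_ge_aux) (auto elim: eventually_mono)
  show ?thesis using g1 g2 g3 g4 by blast
qed

end
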